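(* Let $m$ be a positive integer. There exists a bounded linear operator $L\colon\mathsf{D}(A_0^{2m})\to\mathsf{D}(A^{2m})$ such that $(Lf)(x)=f(x)$ for all $x\ge0$ and all $f\in\mathsf{D}(A_0^{2m})$, and $(Lf)(+\infty)=f(+\infty)$.
   Context: Fix $w>0$. $H(\mathbb{R})$ is the Hilbert space of absolutely continuous $f\in L^1_{\mathrm{loc}}(\mathbb{R})$ with $f'\in L^2(\mathbb{R},e^{wx}dx)$, with inner product $\langle f,g\rangle=f(+\infty)g(+\infty)+\int_\mathbb{R}f'g'e^{wx}dx$; $A f=f'$ on $\mathsf{D}(A)=\{f\in H(\mathbb{R}):f'\in H(\mathbb{R})\}$ generates the translation semigroup on $H(\mathbb{R})$. $H(\mathbb{R}_+)$ is defined analogously on $\mathbb{R}_+$ (inner product $f(+\infty)g(+\infty)+\int_0^\infty f'g'e^{wx}dx$) and $A_0f=f'$ on $\mathsf{D}(A_0)=\{f\in H(\mathbb{R}_+):f'\in H(\mathbb{R}_+)\}$. Domains of powers carry graph norms $\|f\|^2_{\mathsf{D}(A^k)}=\sum_{j\le k}\|A^jf\|^2$, and similarly for $A_0$. *)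

theory Defs
  imports "HOL-Analysis.Analysis"
begin

text \<open>Weighted spaces H(S), S = UNIV (the line) or {0..} (the half line), weight exp(w x).
  A function f (a genuine, continuous representative) has weak derivative g on S if g is
  locally absolutely integrable on S, f is the integral of g on S, and g is in L2(S, e^(wx) dx).\<close>

definition Hder :: "real \<Rightarrow> real set \<Rightarrow> (real \<Rightarrow> real) \<Rightarrow> (real \<Rightarrow> real) \<Rightarrow> bool" where
  "Hder w S f g \<longleftrightarrow>
     (\<forall>x\<in>S. \<forall>y\<in>S. x \<le> y \<longrightarrow> g absolutely_integrable_on {x..y} \<and> f y - f x = integral {x..y} g)
     \<and> (\<lambda>x. (g x)\<^sup>2 * exp (w * x)) integrable_on S"

definition Hsp :: "real \<Rightarrow> real set \<Rightarrow> (real \<Rightarrow> real) \<Rightarrow> bool" where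
  "Hsp w S f \<longleftrightarrow> (\<exists>g. Hder w S f g)"

text \<open>The generator A f = f' (choosing the representative lying in H when it exists,
  which is then unique on S, being continuous).\<close>
definition Aop :: "real \<Rightarrow> real set \<Rightarrow> (real \<Rightarrow> real) \<Rightarrow> (real \<Rightarrow> real)" where
  "Aop w S f = (if \<exists>g. Hder w S f g \<and> Hsp w S g then (SOME g. Hder w S f g \<and> Hsp w S g)
                else (SOME g. Hder w S f g))"

definition Hnorm2 :: "real \<Rightarrow> real set \<Rightarrow> (real \<Rightarrow> real) \<Rightarrow> real" where
  "Hnorm2 w S f = (Lim at_top f)\<^sup>2 + integral S (\<lambda>x. (Aop w S f x)\<^sup>2 * exp (w * x))"

definition Dom :: "real \<Rightarrow> real set \<Rightarrow> nat \<Rightarrow> (real \<Rightarrow> real) \<Rightarrow> bool" where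
  "Dom w S k f \<longleftrightarrow> (\<forall>j\<le>k. Hsp w S ((Aop w S ^^ j) f))"

definition gnorm :: "real \<Rightarrow> real set \<Rightarrow> nat \<Rightarrow> (real \<Rightarrow> real) \<Rightarrow> real" where
  "gnorm w S k f = sqrt (\<Sum>j\<le>k. Hnorm2 w S ((Aop w S ^^ j) f))"

end

theory Submission
  imports Defs
begin


lemma enn2real_inj: "enn2real (a::ennreal) = enn2real b \<Longrightarrow> a < \<infinity> \<Longrightarrow> b < \<infinity> \<Longrightarrow> a = b"
  by (metis ennreal_enn2real infinity_ennreal_def)

lemma dens_zero:
  fixes k :: "real \<Rightarrow> real"
  assumes k: "integrable lborel k" and z: "\<And>x. (\<integral>y. indicator {x<..} y * k y \<partial>lborel) = 0"
  shows "AE x in lborel. k x = 0"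
proof -
  have km[measurable]: "k \<in> borel_measurable borel" using k by auto
  define M1 where "M1 = density lborel (\<lambda>x. ennreal (k x))"
  define M2 where "M2 = density lborel (\<lambda>x. ennreal (- k x))"
  have fin1: "(\<integral>\<^sup>+y. ennreal (k y) * indicator A y \<partial>lborel) < \<infinity>" for A
  proof -
    have "(\<integral>\<^sup>+y. ennreal (k y) * indicator A y \<partial>lborel) \<le> (\<integral>\<^sup>+y. ennreal (norm (k y)) \<partial>lborel)"
      by (intro nn_integral_mono) (auto simp: indicator_def ennreal_leI)
    also have "\<dots> < \<infinity>" using k by (simp add: integrable_iff_bounded)
    finally show ?thesis .
  qed
  have fin2: "(\<integral>\<^sup>+y. ennreal (- k y) * indicator A y \<partial>lborel) < \<infinity>" for A
  proof -
    have "(\<integral>\<^sup>+y. ennreal (- k y) * indicator A y \<partial>lborel) \<le> (\<integral>\<^sup>+y. ennreal (norm (k y)) \<partial>lborel)"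
      by (intro nn_integral_mono) (auto simp: indicator_def ennreal_leI)
    also have "\<dots> < \<infinity>" using k by (simp add: integrable_iff_bounded)
    finally show ?thesis .
  qed
  have eq: "emeasure M1 {x<..} = emeasure M2 {x<..}" for x
  proof -
    have int: "integrable lborel (\<lambda>y. indicator {x<..} y * k y)"
      using integrable_mult_indicator[of "{x<..}" lborel k] k by simp
    have "0 = enn2real (\<integral>\<^sup>+y. ennreal (indicator {x<..} y * k y) \<partial>lborel) -
       enn2real (\<integral>\<^sup>+y. ennreal (- (indicator {x<..} y * k y)) \<partial>lborel)"
      using real_lebesgue_integral_def[OF int] z[of x] by simp
    moreover have "(\<lambda>y. ennreal (indicator {x<..} y * k y)) = (\<lambda>y. ennreal (k y) * indicator {x<..} y)"
      by (auto simp: indicator_def)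
    moreover have "(\<lambda>y. ennreal (- (indicator {x<..} y * k y))) = (\<lambda>y. ennreal (- k y) * indicator {x<..} y)"
      by (auto simp: indicator_def)
    ultimately have "enn2real (\<integral>\<^sup>+y. ennreal (k y) * indicator {x<..} y \<partial>lborel) =
        enn2real (\<integral>\<^sup>+y. ennreal (- k y) * indicator {x<..} y \<partial>lborel)" by simp
    then have "(\<integral>\<^sup>+y. ennreal (k y) * indicator {x<..} y \<partial>lborel) =
        (\<integral>\<^sup>+y. ennreal (- k y) * indicator {x<..} y \<partial>lborel)"
      using fin1[of "{x<..}"] fin2[of "{x<..}"] by (rule enn2real_inj)
    then show ?thesis unfolding M1_def M2_def by (simp add: emeasure_density)
  qed
  have M12: "M1 = M2"
  proof (rule measure_eqI_lessThan)
    show "sets M1 = sets borel" "sets M2 = sets borel" unfolding M1_def M2_def by auto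
    show "emeasure M1 {x<..} < \<infinity>" for x unfolding M1_def using fin1 by (simp add: emeasure_density)
  qed (rule eq)
  have A1: "AE x in lborel. \<not> k x > 0"
  proof -
    have "emeasure M2 {x. k x > 0} = (\<integral>\<^sup>+y. ennreal (- k y) * indicator {x. k x > 0} y \<partial>lborel)"
      unfolding M2_def by (rule emeasure_density) auto
    also have "\<dots> = (\<integral>\<^sup>+(y::real). 0 \<partial>lborel)" by (rule nn_integral_cong) (auto split: split_indicator simp: ennreal_neg)
    also have "\<dots> = 0" by simp
    finally have "emeasure M1 {x. k x > 0} = 0" using M12 by simp
    moreover have "emeasure M1 {x. k x > 0} = (\<integral>\<^sup>+y. ennreal (k y) * indicator {x. k x > 0} y \<partial>lborel)"
      unfolding M1_def by (rule emeasure_density) auto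
    ultimately have "(\<integral>\<^sup>+y. ennreal (k y) * indicator {x. k x > 0} y \<partial>lborel) = 0" by simp
    then have "AE y in lborel. ennreal (k y) * indicator {x. k x > 0} y = 0"
      by (subst (asm) nn_integral_0_iff_AE) auto
    then show ?thesis by eventually_elim (auto simp: indicator_def)
  qed
  have A2: "AE x in lborel. \<not> k x < 0"
  proof -
    have "emeasure M1 {x. k x < 0} = (\<integral>\<^sup>+y. ennreal (k y) * indicator {x. k x < 0} y \<partial>lborel)"
      unfolding M1_def by (rule emeasure_density) auto
    also have "\<dots> = (\<integral>\<^sup>+(y::real). 0 \<partial>lborel)" by (rule nn_integral_cong) (auto split: split_indicator simp: ennreal_neg)
    also have "\<dots> = 0" by simp
    finally have "emeasure M2 {x. k x < 0} = 0" using M12 by simp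
    moreover have "emeasure M2 {x. k x < 0} = (\<integral>\<^sup>+y. ennreal (- k y) * indicator {x. k x < 0} y \<partial>lborel)"
      unfolding M2_def by (rule emeasure_density) auto
    ultimately have "(\<integral>\<^sup>+y. ennreal (- k y) * indicator {x. k x < 0} y \<partial>lborel) = 0" by simp
    then have "AE y in lborel. ennreal (- k y) * indicator {x. k x < 0} y = 0"
      by (subst (asm) nn_integral_0_iff_AE) auto
    then show ?thesis by eventually_elim (auto simp: indicator_def)
  qed
  from A1 A2 show ?thesis by eventually_elim auto
qed

lemma ae_unique0:
  fixes h :: "real \<Rightarrow> real"
  assumes ai: "\<And>x y. x \<le> y \<Longrightarrow> h absolutely_integrable_on {x..y}"
    and z: "\<And>x y. x \<le> y \<Longrightarrow> integral {x..y} h = 0"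
  shows "negligible {x. h x \<noteq> 0}"
proof -
  have int0: "integral ({x<..} \<inter> {a..b}) h = 0" if "a \<le> b" for x a b
  proof (cases "x < a")
    case True then have "{x<..} \<inter> {a..b} = {a..b}" by auto
    then show ?thesis using z that by simp
  next
    case False
    show ?thesis
    proof (cases "x \<le> b")
      case True
      have "integral ({x<..} \<inter> {a..b}) h = integral {x..b} h"
        by (rule integral_spike_set; rule negligible_subset[of "{x}"]) (use False in auto)
      then show ?thesis using z True by simp
    next
      case False then have "{x<..} \<inter> {a..b} = {}" by auto
      then show ?thesis by simp
    qed
  qed
  have AEn: "AE x in lborel. x \<in> {-real n..real n} \<longrightarrow> h x = 0" for n :: nat
  proof -
    define k where "k = (\<lambda>x. indicator {-real n..real n} x * h x)"
    have ki: "integrable lebesgue k"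
      using ai[of "-real n" "real n"] unfolding k_def set_integrable_def by simp
    then have "k \<in> borel_measurable lebesgue" by auto
    then obtain g where g: "g \<in> borel_measurable lborel" and kg: "AE x in lborel. k x = g x"
      using completion_ex_borel_measurable_real by blast
    have kgL: "AE x in lebesgue. k x = g x" using kg by (rule AE_completion)
    have gL: "g \<in> borel_measurable lebesgue" using g by (rule measurable_completion)
    have gi: "integrable lborel g"
    proof -
      have "integrable lebesgue g"
        using ki integrable_cong_AE[OF \<open>k \<in> borel_measurable lebesgue\<close> gL kgL] by simp
      then show ?thesis using integrable_completion[OF g] by simp
    qed
    have "(\<integral>y. indicator {x<..} y * g y \<partial>lborel) = 0" for x
    proof -
      have m1: "(\<lambda>y. indicator {x<..} y * g y) \<in> borel_measurable lborel" using g by simp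
      have "(\<integral>y. indicator {x<..} y * g y \<partial>lborel) = (\<integral>y. indicator {x<..} y * g y \<partial>lebesgue)"
        using integral_completion[OF m1] by simp
      also have "\<dots> = (\<integral>y. indicator {x<..} y * k y \<partial>lebesgue)"
        by (rule integral_cong_AE) (use kgL gL \<open>k \<in> borel_measurable lebesgue\<close> in \<open>auto intro!: borel_measurable_times borel_measurable_indicator\<close>)
      also have "\<dots> = (LINT y:({x<..} \<inter> {-real n..real n})|lebesgue. h y)"
        unfolding k_def set_lebesgue_integral_def by (intro Bochner_Integration.integral_cong) (auto split: split_indicator)
      also have "\<dots> = integral ({x<..} \<inter> {-real n..real n}) h"
        by (rule set_lebesgue_integral_eq_integral(2)) (rule set_integrable_subset[OF ai[of "-real n" "real n"]]; auto)
      also have "\<dots> = 0" by (rule int0) simp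
      finally show ?thesis .
    qed
    then have "AE x in lborel. g x = 0" by (rule dens_zero[OF gi])
    with kg show ?thesis by eventually_elim (auto simp: k_def)
  qed
  then have "AE x in lborel. \<forall>n::nat. x \<in> {-real n..real n} \<longrightarrow> h x = 0"
    by (subst AE_all_countable) (use AEn in blast)
  then have "AE x in lborel. h x = 0"
  proof eventually_elim
    case (elim x)
    obtain n :: nat where "\<bar>x\<bar> \<le> real n" using real_arch_simple by blast
    with elim[rule_format, of n] show ?case by (auto simp: abs_le_iff)
  qed
  then obtain N where N: "N \<in> null_sets lborel" "{x\<in>space lborel. \<not> h x = 0} \<subseteq> N"
    by (force simp: eventually_ae_filter)
  have "N \<in> null_sets lebesgue" using N(1) by (rule null_sets_completionI)
  then have "negligible N" by (simp add: negligible_iff_null_sets)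
  then show ?thesis by (rule negligible_subset) (use N(2) in auto)
qed

lemma Hder_cong: "(\<And>x. x \<in> S \<Longrightarrow> f x = f' x) \<Longrightarrow> Hder w S f = Hder w S f'"
  unfolding Hder_def by (intro ext) auto

lemma Aop_cong: assumes "\<And>x. x \<in> S \<Longrightarrow> f x = f' x" shows "Aop w S f = Aop w S f'"
proof -
  have e: "Hder w S f = Hder w S f'" using Hder_cong[of S f f' w] assms by blast
  show ?thesis unfolding Aop_def e ..
qed

lemma Aop_Hder: assumes "Hsp w S f" shows "Hder w S f (Aop w S f)"
proof (cases "\<exists>g. Hder w S f g \<and> Hsp w S g")
  case True
  then show ?thesis unfolding Aop_def using someI_ex[OF True] by simp
next
  case False
  have ex: "\<exists>g. Hder w S f g" using assms unfolding Hsp_def .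
  show ?thesis unfolding Aop_def using False someI_ex[OF ex] by auto
qed

lemma Aop_Hsp: "Hder w S f g \<Longrightarrow> Hsp w S g \<Longrightarrow> Hder w S f (Aop w S f) \<and> Hsp w S (Aop w S f)"
proof -
  assume "Hder w S f g" "Hsp w S g"
  then have ex: "\<exists>g. Hder w S f g \<and> Hsp w S g" by blast
  then show ?thesis unfolding Aop_def using someI_ex[OF ex] by simp
qed

lemma Hder_ai: "Hder w S f g \<Longrightarrow> x \<in> S \<Longrightarrow> y \<in> S \<Longrightarrow> x \<le> y \<Longrightarrow> g absolutely_integrable_on {x..y}"
  unfolding Hder_def by blast

lemma Hder_integrable: "Hder w S f g \<Longrightarrow> x \<in> S \<Longrightarrow> y \<in> S \<Longrightarrow> x \<le> y \<Longrightarrow> g integrable_on {x..y}"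
  using Hder_ai set_lebesgue_integral_eq_integral(1) by blast

lemma Hder_eq: "Hder w S f g \<Longrightarrow> x \<in> S \<Longrightarrow> y \<in> S \<Longrightarrow> x \<le> y \<Longrightarrow> f y - f x = integral {x..y} g"
  unfolding Hder_def by blast

lemma Hder_sq: "Hder w S f g \<Longrightarrow> (\<lambda>x. (g x)\<^sup>2 * exp (w * x)) integrable_on S"
  unfolding Hder_def by blast

lemma Hder_cont:
  assumes "Hder w S f g" "a \<in> S" "b \<in> S" "{a..b} \<subseteq> S"
  shows "continuous_on {a..b} f"
proof (cases "a \<le> b")
  case True
  have "continuous_on {a..b} (\<lambda>x. f a + integral {a..x} g)"
    by (intro continuous_intros indefinite_integral_continuous_1 Hder_integrable[OF assms(1)]) (use assms True in auto)
  then show ?thesis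
  proof (rule continuous_on_eq)
    fix x assume "x \<in> {a..b}"
    then show "f a + integral {a..x} g = f x" using Hder_eq[OF assms(1), of a x] assms by auto
  qed
qed auto

lemma Hder_unique:
  assumes H1: "Hder w S f g1" and H2: "Hder w S f g2" and ab: "a < b" "{a..b} \<subseteq> S"
    and c1: "continuous_on {a..b} g1" and c2: "continuous_on {a..b} g2" and x: "x \<in> {a..b}"
  shows "g1 x = g2 x"
proof -
  let ?h = "\<lambda>x. g1 x - g2 x"
  have c: "continuous_on {a..b} ?h" using c1 c2 by (intro continuous_intros)
  have D: "((\<lambda>u. integral {a..u} ?h) has_vector_derivative ?h x) (at x within {a..b})"
    by (rule integral_has_vector_derivative[OF c x])
  have z: "integral {a..u} ?h = 0" if "u \<in> {a..b}" for u
  proof -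
    have "a \<in> S" "u \<in> S" using that ab by auto
    then have "integral {a..u} ?h = integral {a..u} g1 - integral {a..u} g2"
      using that by (intro integral_diff Hder_integrable[OF H1] Hder_integrable[OF H2]) auto
    also have "\<dots> = 0" using Hder_eq[OF H1 \<open>a \<in> S\<close> \<open>u \<in> S\<close>] Hder_eq[OF H2 \<open>a \<in> S\<close> \<open>u \<in> S\<close>] that by auto
    finally show ?thesis .
  qed
  have "((\<lambda>u. 0) has_vector_derivative ?h x) (at x within {a..b})"
    by (rule has_vector_derivative_transform[OF x _ D]) (simp add: z)
  moreover have "((\<lambda>u. 0) has_vector_derivative 0) (at x within {a..b})" by (rule has_vector_derivative_const)
  ultimately have "?h x = 0" using vector_derivative_within_cbox[of a b x] ab(1) x by (metis cbox_interval)
  then show ?thesis by simp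
qed

lemma Hder_meas0:
  assumes "Hder w {0..} f g" shows "g \<in> borel_measurable (lebesgue_on {0..})"
proof -
  have "(\<lambda>x. if x \<in> {0..} then g x else 0) integrable_on cbox a b" for a b
  proof -
    have "g integrable_on ({0..} \<inter> cbox a b)"
    proof (cases "0 \<le> b")
      case True
      have "{0..} \<inter> cbox a b = {max a 0..b}" by auto
      moreover have "g integrable_on {max a 0..b}"
      proof (cases "max a 0 \<le> b")
        case True then show ?thesis using Hder_integrable[OF assms, of "max a 0" b] by simp
      next
        case False then show ?thesis by auto
      qed
      ultimately show ?thesis by metis
    next
      case False
      then have "{0..} \<inter> cbox a b = {}" by auto
      then show ?thesis by (metis integrable_on_empty)
    qed
    then show ?thesis using integrable_restrict_Int[of "{0..}" g "cbox a b"] by blast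
  qed
  then have "(\<lambda>x. if x \<in> {0..} then g x else 0) measurable_on UNIV"
    by (rule integrable_subintervals_imp_measurable)
  then have "g measurable_on {0..}" using measurable_on_UNIV[of "{0..}" g] by simp
  then show ?thesis by (simp add: measurable_on_iff_borel_measurable)
qed



lemma exp_meas0: "(\<lambda>x::real. exp (w * x)) \<in> borel_measurable (lebesgue_on {0..})"
  by (rule continuous_imp_measurable_on_sets_lebesgue) (auto intro: continuous_intros)

lemma sq2: "((a::real) + b)\<^sup>2 \<le> 2 * a\<^sup>2 + 2 * b\<^sup>2"
  using zero_le_power2[of "a - b"] unfolding power2_eq_square by (simp add: algebra_simps)

lemma Hder_add0:
  assumes H1: "Hder w {0..} f1 g1" and H2: "Hder w {0..} f2 g2"
  shows "Hder w {0..} (\<lambda>x. f1 x + f2 x) (\<lambda>x. g1 x + g2 x)"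
proof -
  have m1: "g1 \<in> borel_measurable (lebesgue_on {0..})" by (rule Hder_meas0[OF H1])
  have m2: "g2 \<in> borel_measurable (lebesgue_on {0..})" by (rule Hder_meas0[OF H2])
  have sq: "(\<lambda>x. (g1 x + g2 x)\<^sup>2 * exp (w * x)) integrable_on {0..}"
  proof (rule measurable_bounded_by_integrable_imp_integrable_real)
    show "(\<lambda>x. (g1 x + g2 x)\<^sup>2 * exp (w * x)) \<in> borel_measurable (lebesgue_on {0..})"
      by (intro borel_measurable_times borel_measurable_add borel_measurable_power m1 m2 exp_meas0)
    show "(\<lambda>x. 2 * ((g1 x)\<^sup>2 * exp (w * x)) + 2 * ((g2 x)\<^sup>2 * exp (w * x))) integrable_on {0..}"
      using Hder_sq[OF H1] Hder_sq[OF H2] by (intro integrable_add integrable_on_mult_right)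
    show "\<bar>(g1 x + g2 x)\<^sup>2 * exp (w * x)\<bar> \<le> 2 * ((g1 x)\<^sup>2 * exp (w * x)) + 2 * ((g2 x)\<^sup>2 * exp (w * x))" for x
    proof -
      have "(g1 x + g2 x)\<^sup>2 \<le> 2 * (g1 x)\<^sup>2 + 2 * (g2 x)\<^sup>2" by (rule sq2)
      then have "(g1 x + g2 x)\<^sup>2 * exp (w * x) \<le> (2 * (g1 x)\<^sup>2 + 2 * (g2 x)\<^sup>2) * exp (w * x)" by (intro mult_right_mono) auto
      then show ?thesis by (simp add: algebra_simps)
    qed
  qed auto
  show ?thesis unfolding Hder_def
  proof (intro conjI ballI impI sq)
    fix x y :: real assume xy: "x \<in> {0..}" "y \<in> {0..}" "x \<le> y"
    show "(\<lambda>x. g1 x + g2 x) absolutely_integrable_on {x..y}"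
      using Hder_ai[OF H1 xy] Hder_ai[OF H2 xy] by (rule set_integral_add(1))
    have "integral {x..y} (\<lambda>x. g1 x + g2 x) = integral {x..y} g1 + integral {x..y} g2"
      by (rule integral_add) (rule Hder_integrable[OF H1 xy], rule Hder_integrable[OF H2 xy])
    then show "f1 y + f2 y - (f1 x + f2 x) = integral {x..y} (\<lambda>x. g1 x + g2 x)"
      using Hder_eq[OF H1 xy] Hder_eq[OF H2 xy] by linarith
  qed
qed

lemma Hder_cmult:
  assumes H: "Hder w S f g"
  shows "Hder w S (\<lambda>x. c * f x) (\<lambda>x. c * g x)"
  unfolding Hder_def
proof (intro conjI ballI impI)
  fix x y :: real assume xy: "x \<in> S" "y \<in> S" "x \<le> y"
  show "(\<lambda>x. c * g x) absolutely_integrable_on {x..y}"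
    using Hder_ai[OF H xy] by (rule set_integrable_mult_right)
  show "c * f y - c * f x = integral {x..y} (\<lambda>x. c * g x)"
  proof -
    have "c * f y - c * f x = c * (f y - f x)" by (simp add: algebra_simps)
    then show ?thesis using Hder_eq[OF H xy] by simp
  qed
next
  have "(\<lambda>x. c\<^sup>2 * ((g x)\<^sup>2 * exp (w * x))) integrable_on S"
    using Hder_sq[OF H] by (rule integrable_on_mult_right)
  then show "(\<lambda>x. (c * g x)\<^sup>2 * exp (w * x)) integrable_on S" by (simp add: power_mult_distrib mult.assoc)
qed



lemma exp_int_neg:
  assumes c: "0 < (c::real)"
  shows "(\<lambda>x. exp (c * x)) absolutely_integrable_on {..0}"
proof -
  have 1: "(\<lambda>x. exp (-c * x)) absolutely_integrable_on {0..}"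
    by (rule nonnegative_absolutely_integrable_1) (use integrable_on_exp_minus_to_infinity[OF c] in auto)
  have m: "(\<lambda>x. indicator {0..} x * exp (-c * x)) \<in> borel_measurable lborel" by measurable
  have 2: "integrable lborel (\<lambda>x. indicator {0..} x * exp (-c * x))"
    using 1 integrable_completion[OF m] unfolding set_integrable_def by simp
  have eq: "(\<lambda>x. indicator {..0} (0 + (-1) * x) * exp (c * (0 + (-1) * x))) = (\<lambda>x::real. indicator {0..} x * exp (-c * x))"
    by (auto simp: indicator_def)
  have 3: "integrable lborel (\<lambda>x. indicator {..0} x * exp (c * x))"
    using lborel_integrable_real_affine_iff[of "-1" "\<lambda>x. indicator {..0} x * exp (c * x)" 0] 2 eq by simp
  have m2: "(\<lambda>x. indicator {..0} x * exp (c * x)) \<in> borel_measurable lborel" by measurable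
  show ?thesis using 3 integrable_completion[OF m2] unfolding set_integrable_def by simp
qed

lemma pow_le_exp:
  assumes "0 \<le> (y::real)" shows "y ^ p \<le> fact p * exp y"
proof -
  have "(\<lambda>k. y ^ k /\<^sub>R fact k) sums exp y" by (rule exp_converges)
  then have s: "summable (\<lambda>k. y ^ k / fact k)" and e: "exp y = (\<Sum>k. y ^ k / fact k)"
    by (auto simp: sums_iff divide_inverse_commute)
  have "sum (\<lambda>k. y ^ k / fact k) {p} \<le> (\<Sum>k. y ^ k / fact k)"
    by (rule sum_le_suminf[OF s]) (use assms in auto)
  then have "y ^ p / fact p \<le> exp y" using e by simp
  then show ?thesis by (simp add: field_simps)
qed

lemma absx_pow_bound:
  assumes w: "0 < w" and x: "x \<le> (0::real)"
  shows "\<bar>x\<bar> ^ p \<le> fact p * (2 / w) ^ p * exp (- w * x / 2)"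
proof -
  have a: "(w / 2 * \<bar>x\<bar>) ^ p \<le> fact p * exp (w / 2 * \<bar>x\<bar>)"
    by (rule pow_le_exp) (use w in auto)
  have b: "(w / 2 * \<bar>x\<bar>) ^ p = (w / 2) ^ p * \<bar>x\<bar> ^ p" by (rule power_mult_distrib)
  have c: "w / 2 * \<bar>x\<bar> = - w * x / 2" using x by (simp add: abs_of_nonpos)
  have "(w / 2) ^ p * \<bar>x\<bar> ^ p \<le> fact p * exp (- w * x / 2)" using a b c by metis
  then have "(2 / w) ^ p * ((w / 2) ^ p * \<bar>x\<bar> ^ p) \<le> (2 / w) ^ p * (fact p * exp (- w * x / 2))"
    by (intro mult_left_mono) (use w in auto)
  moreover have "(2 / w) ^ p * (w / 2) ^ p = 1" using w by (simp add: power_mult_distrib[symmetric])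
  ultimately show ?thesis by (simp add: algebra_simps)
qed

lemma Wint:
  assumes w: "0 < (w::real)"
  shows "(\<lambda>x. (1 + \<bar>x\<bar> ^ n)\<^sup>2 * exp (w * x)) integrable_on {..0}"
proof (rule measurable_bounded_by_integrable_imp_integrable_real)
  define K :: real where "K = fact (2*n) * (2 / w) ^ (2*n)"
  show "(\<lambda>x. (1 + \<bar>x\<bar> ^ n)\<^sup>2 * exp (w * x)) \<in> borel_measurable (lebesgue_on {..0})"
    by (rule continuous_imp_measurable_on_sets_lebesgue) (auto intro!: continuous_intros)
  show "(\<lambda>x. (2 + 2 * K) * exp ((w/2) * x)) integrable_on {..0}"
    using exp_int_neg[of "w/2"] w set_lebesgue_integral_eq_integral(1) by (intro integrable_on_mult_right) auto
  show "\<bar>(1 + \<bar>x\<bar> ^ n)\<^sup>2 * exp (w * x)\<bar> \<le> (2 + 2 * K) * exp ((w/2) * x)" if x: "x \<in> {..0}" for x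
  proof -
    have b: "\<bar>x\<bar> ^ (2*n) \<le> K * exp (- w * x / 2)" unfolding K_def using absx_pow_bound[OF w, of x "2*n"] x by simp
    have pe: "(\<bar>x\<bar> ^ n)\<^sup>2 = \<bar>x\<bar> ^ (2*n)" by (metis power_mult mult.commute)
    have "(1 + \<bar>x\<bar> ^ n)\<^sup>2 \<le> 2 + 2 * \<bar>x\<bar> ^ (2*n)"
      using sq2[of 1 "\<bar>x\<bar> ^ n"] unfolding pe by simp
    then have "(1 + \<bar>x\<bar> ^ n)\<^sup>2 * exp (w * x) \<le> (2 + 2 * \<bar>x\<bar> ^ (2*n)) * exp (w * x)"
      by (intro mult_right_mono) auto
    also have "\<dots> \<le> (2 + 2 * (K * exp (- w * x / 2))) * exp (w * x)"
      using b by (intro mult_right_mono) auto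
    also have "\<dots> = 2 * exp (w * x) + 2 * K * exp ((w/2) * x)"
      by (simp add: algebra_simps flip: exp_add)
    also have "\<dots> \<le> 2 * exp ((w/2) * x) + 2 * K * exp ((w/2) * x)"
      using x w by (auto intro: mult_left_mono_neg)
    also have "\<dots> = (2 + 2 * K) * exp ((w/2) * x)" by (simp add: algebra_simps)
    finally show ?thesis by simp
  qed
qed auto

lemma am_gm_t:
  assumes t: "0 < t" and E: "0 < (E::real)" shows "2 * \<bar>a\<bar> \<le> t * a\<^sup>2 * E + 1 / (t * E)"
proof -
  have "0 \<le> (t * \<bar>a\<bar> * E - 1)\<^sup>2 / (t * E)" using assms by simp
  also have "(t * \<bar>a\<bar> * E - 1)\<^sup>2 / (t * E) = t * a\<^sup>2 * E + 1 / (t * E) - 2 * \<bar>a\<bar>"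
    using assms by (simp add: power2_eq_square field_simps abs_mult_self_eq)
  finally show ?thesis by simp
qed

lemma sq_bound_from_t:
  fixes I w J :: real
  assumes I: "0 \<le> I" and w: "0 < w" and J: "0 \<le> J"
    and b: "\<And>t. 0 < t \<Longrightarrow> J \<le> (t * I + 1 / (w * t)) / 2"
  shows "J\<^sup>2 \<le> I / w"
proof (cases "I = 0")
  case True
  have "J = 0"
  proof (rule ccontr)
    assume "J \<noteq> 0" then have Jp: "0 < J" using J by simp
    have "J \<le> (1 / (w * (1 / (w * J)))) / 2" using b[of "1 / (w * J)"] True Jp w by simp
    also have "\<dots> = J / 2" using Jp w by simp
    finally show False using Jp by simp
  qed
  then show ?thesis using True by simp
next
  case False
  then have Ip: "0 < I" using I by simp
  define s where "s = sqrt (I / w)"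
  have sp: "0 < s" unfolding s_def using Ip w by simp
  have s2: "s\<^sup>2 = I / w" unfolding s_def using Ip w by simp
  have "J \<le> ((s / I) * I + 1 / (w * (s / I))) / 2" using b[of "s / I"] sp Ip by simp
  also have "(s / I) * I = s" using Ip by simp
  also have "1 / (w * (s / I)) = s"
  proof -
    have "I = w * s\<^sup>2" using s2 w by (simp add: field_simps)
    then show ?thesis using sp w by (simp add: field_simps power2_eq_square)
  qed
  finally have "J \<le> s" by simp
  then have "J\<^sup>2 \<le> s\<^sup>2" using J by (intro power_mono) auto
  then show ?thesis using s2 by simp
qed

lemma Hder_lim0:
  assumes H: "Hder w {0..} g h" and w: "0 < w"
  shows "\<exists>L. (g \<longlongrightarrow> L) at_top \<and> (g 0 - L)\<^sup>2 \<le> integral {0..} (\<lambda>x. (h x)\<^sup>2 * exp (w * x)) / w"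
proof -
  define I where "I = integral {0..} (\<lambda>x. (h x)\<^sup>2 * exp (w * x))"
  have hsq: "((\<lambda>x. (h x)\<^sup>2 * exp (w * x)) has_integral I) {0..}"
    unfolding I_def using Hder_sq[OF H] by (rule integrable_integral)
  have I0: "0 \<le> I" unfolding I_def by (rule integral_nonneg[OF Hder_sq[OF H]]) auto
  have ex: "((\<lambda>x. exp (- w * x)) has_integral 1 / w) {0..}"
    using has_integral_exp_minus_to_infinity[OF w, of 0] by simp
  define B where "B = (\<lambda>t x. t / 2 * ((h x)\<^sup>2 * exp (w * x)) + 1 / (2 * t) * exp (- w * x))"
  have Bint: "(B t has_integral (t / 2 * I + 1 / (2 * t) * (1 / w))) {0..}" for t
    unfolding B_def by (intro has_integral_add has_integral_mult_right hsq ex)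
  have Bbound: "\<bar>h x\<bar> \<le> B t x" if "0 < t" for t x
  proof -
    have "2 * \<bar>h x\<bar> \<le> t * (h x)\<^sup>2 * exp (w * x) + 1 / (t * exp (w * x))"
      by (rule am_gm_t) (use that in auto)
    moreover have "1 / (t * exp (w * x)) = exp (- w * x) / t" by (simp add: exp_minus field_simps)
    ultimately show ?thesis unfolding B_def using that by (simp add: field_simps)
  qed
  have hm: "h \<in> borel_measurable (lebesgue_on {0..})" by (rule Hder_meas0[OF H])
  have ha: "h absolutely_integrable_on {0..}"
    by (rule measurable_bounded_by_integrable_imp_absolutely_integrable[OF hm _ has_integral_integrable[OF Bint[of 1]]])
       (use Bbound[of 1] in auto)
  have hi: "h integrable_on {0..}" using ha set_lebesgue_integral_eq_integral(1) by blast
  have lim1: "((\<lambda>b. set_lebesgue_integral lebesgue {0..b} h) \<longlongrightarrow> set_lebesgue_integral lebesgue {0..} h) at_top"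
    by (rule tendsto_set_lebesgue_integral_at_top) (use ha in auto)
  have e1: "set_lebesgue_integral lebesgue {0..} h = integral {0..} h"
    using set_lebesgue_integral_eq_integral(2)[OF ha] .
  have e2: "\<forall>\<^sub>F b in at_top. set_lebesgue_integral lebesgue {0..b} h = g b - g 0"
  proof (rule eventually_at_top_linorderI[of 0])
    fix b :: real assume b: "0 \<le> b"
    have "set_integrable lebesgue {0..b} h" by (rule set_integrable_subset[OF ha]) auto
    then have "set_lebesgue_integral lebesgue {0..b} h = integral {0..b} h"
      by (rule set_lebesgue_integral_eq_integral(2))
    also have "\<dots> = g b - g 0" using Hder_eq[OF H, of 0 b] b by simp
    finally show "set_lebesgue_integral lebesgue {0..b} h = g b - g 0" .
  qed
  have "((\<lambda>b. g b - g 0) \<longlongrightarrow> integral {0..} h) at_top"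
    using lim1 unfolding e1 using tendsto_cong[OF e2] by simp
  then have "((\<lambda>b. (g b - g 0) + g 0) \<longlongrightarrow> integral {0..} h + g 0) at_top"
    by (intro tendsto_add) auto
  then have lim: "(g \<longlongrightarrow> g 0 + integral {0..} h) at_top" by (simp add: add.commute)
  have J: "\<bar>integral {0..} h\<bar> \<le> (t * I + 1 / (w * t)) / 2" if t: "0 < t" for t
  proof -
    have "norm (integral {0..} h) \<le> integral {0..} (B t)"
      by (rule integral_norm_bound_integral[OF hi has_integral_integrable[OF Bint]]) (use Bbound t in auto)
    also have "\<dots> = t / 2 * I + 1 / (2 * t) * (1 / w)" by (rule integral_unique[OF Bint])
    also have "\<dots> = (t * I + 1 / (w * t)) / 2" by (simp add: field_simps)
    finally show ?thesis by simp
  qed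
  have "\<bar>integral {0..} h\<bar>\<^sup>2 \<le> I / w" by (rule sq_bound_from_t[OF I0 w _ J]) auto
  then have "(g 0 - (g 0 + integral {0..} h))\<^sup>2 \<le> I / w" by simp
  with lim show ?thesis unfolding I_def by blast
qed



definition dd :: "real \<Rightarrow> (real \<Rightarrow> real) \<Rightarrow> nat \<Rightarrow> real \<Rightarrow> real" where
  "dd w f k = (Aop w {0..} ^^ k) f"

lemma dd_0[simp]: "dd w f 0 = f" by (simp add: dd_def)
lemma dd_Suc: "dd w f (Suc k) = Aop w {0..} (dd w f k)" by (simp add: dd_def)

lemma dd_Hsp: "Dom w {0..} n f \<Longrightarrow> k \<le> n \<Longrightarrow> Hsp w {0..} (dd w f k)"
  unfolding Dom_def dd_def by blast

lemma dd_Hder: "Dom w {0..} n f \<Longrightarrow> k \<le> n \<Longrightarrow> Hder w {0..} (dd w f k) (dd w f (Suc k))"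
  using Aop_Hder[OF dd_Hsp] dd_Suc by metis

lemma Hsp_cont0: "Hsp w {0..} g \<Longrightarrow> 0 \<le> b \<Longrightarrow> continuous_on {0..b} g"
  unfolding Hsp_def by (auto intro: Hder_cont)

lemma unique0:
  assumes "Hder w {0..} F g1" "Hder w {0..} F g2" "Hsp w {0..} g1" "Hsp w {0..} g2" "0 \<le> x"
  shows "g1 x = g2 x"
  by (rule Hder_unique[OF assms(1,2), of 0 "x+1"]) (use assms in \<open>auto intro: Hsp_cont0\<close>)

lemma dd_add:
  assumes f: "Dom w {0..} n f" and g: "Dom w {0..} n g"
  shows "k \<le> n \<Longrightarrow> 0 \<le> x \<Longrightarrow> dd w (\<lambda>x. f x + g x) k x = dd w f k x + dd w g k x"
proof (induction k arbitrary: x)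
  case 0 then show ?case by simp
next
  case (Suc k)
  define F where "F = (\<lambda>x. dd w f k x + dd w g k x)"
  define G where "G = (\<lambda>x. dd w f (Suc k) x + dd w g (Suc k) x)"
  have e: "dd w (\<lambda>x. f x + g x) (Suc k) = Aop w {0..} F"
    unfolding dd_Suc F_def by (rule Aop_cong) (use Suc in auto)
  have HFG: "Hder w {0..} F G" unfolding F_def G_def
    by (rule Hder_add0; rule dd_Hder) (use Suc f g in auto)
  have HG: "Hsp w {0..} G" unfolding Hsp_def G_def
    by (rule exI, rule Hder_add0; rule dd_Hder) (use Suc f g in auto)
  from Aop_Hsp[OF HFG HG] have A: "Hder w {0..} F (Aop w {0..} F)" "Hsp w {0..} (Aop w {0..} F)" by auto
  have "Aop w {0..} F x = G x" by (rule unique0[OF A(1) HFG A(2) HG]) (use Suc in auto)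
  then show ?case unfolding e G_def .
qed

lemma dd_cmult:
  assumes f: "Dom w {0..} n f"
  shows "k \<le> n \<Longrightarrow> 0 \<le> x \<Longrightarrow> dd w (\<lambda>x. c * f x) k x = c * dd w f k x"
proof (induction k arbitrary: x)
  case 0 then show ?case by simp
next
  case (Suc k)
  define F where "F = (\<lambda>x. c * dd w f k x)"
  define G where "G = (\<lambda>x. c * dd w f (Suc k) x)"
  have e: "dd w (\<lambda>x. c * f x) (Suc k) = Aop w {0..} F"
    unfolding dd_Suc F_def by (rule Aop_cong) (use Suc in auto)
  have HFG: "Hder w {0..} F G" unfolding F_def G_def
    by (rule Hder_cmult; rule dd_Hder) (use Suc f in auto)
  have HG: "Hsp w {0..} G" unfolding Hsp_def G_def
    by (rule exI, rule Hder_cmult; rule dd_Hder) (use Suc f in auto)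
  from Aop_Hsp[OF HFG HG] have A: "Hder w {0..} F (Aop w {0..} F)" "Hsp w {0..} (Aop w {0..} F)" by auto
  have "Aop w {0..} F x = G x" by (rule unique0[OF A(1) HFG A(2) HG]) (use Suc in auto)
  then show ?case unfolding e G_def .
qed

lemma dd_cong:
  assumes "\<And>x. 0 \<le> x \<Longrightarrow> f x = g x"
  shows "0 \<le> x \<Longrightarrow> dd w f k x = dd w g k x"
proof (cases k)
  case 0 then show "0 \<le> x \<Longrightarrow> ?thesis" using assms by simp
next
  case (Suc j)
  have "dd w f j' = dd w g j'" if "j' \<ge> 1" for j'
    using that
  proof (induction j' rule: nat_induct_at_least)
    case base
    have "dd w f (Suc 0) = dd w g (Suc 0)" unfolding dd_Suc dd_0
      by (rule Aop_cong) (use assms in auto)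
    then show ?case by simp
  next
    case (Suc j') then show ?case by (simp add: dd_Suc)
  qed
  then show ?thesis using Suc by simp
qed

definition Pp :: "real \<Rightarrow> nat \<Rightarrow> (real \<Rightarrow> real) \<Rightarrow> nat \<Rightarrow> real \<Rightarrow> real" where
  "Pp w n f j x = (\<Sum>i<Suc n - j. dd w f (j+i) 0 * x^i / fact i)"

definition Ee :: "real \<Rightarrow> nat \<Rightarrow> (real \<Rightarrow> real) \<Rightarrow> nat \<Rightarrow> real \<Rightarrow> real" where
  "Ee w n f j x = (if 0 < x then dd w f j x else Pp w n f j x)"

lemma Pp_at0: "j \<le> n \<Longrightarrow> Pp w n f j 0 = dd w f j 0"
proof -
  assume "j \<le> n" then have "Suc n - j = Suc (n - j)" by simp
  then show ?thesis unfolding Pp_def by (simp add: sum.lessThan_Suc_shift del: sum.lessThan_Suc)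
qed

lemma Pp_deriv:
  assumes "j \<le> n" shows "(Pp w n f j has_real_derivative Pp w n f (Suc j) x) (at x)"
proof -
  define M where "M = n - j"
  have e1: "Suc n - j = Suc M" "Suc n - Suc j = M" using assms unfolding M_def by auto
  define c where "c = (\<lambda>i. dd w f i 0)"
  have P1: "Pp w n f j = (\<lambda>x. c j + (\<Sum>i<M. c (j + Suc i) * x^(Suc i) / fact (Suc i)))"
    unfolding Pp_def e1 c_def by (rule ext) (simp add: sum.lessThan_Suc_shift del: sum.lessThan_Suc)
  have P2: "Pp w n f (Suc j) x = (\<Sum>i<M. c (j + Suc i) * x^i / fact i)"
    unfolding Pp_def e1 c_def by simp
  have t: "((\<lambda>x. c (j + Suc i) * x^(Suc i) / fact (Suc i)) has_real_derivative c (j + Suc i) * x^i / fact i) (at x)" for i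
  proof -
    have "((\<lambda>x. c (j + Suc i) * x^(Suc i) / fact (Suc i)) has_real_derivative c (j + Suc i) * (real (Suc i) * x^i) / fact (Suc i)) (at x)"
      by (intro derivative_eq_intros) auto
    moreover have "c (j + Suc i) * (real (Suc i) * x^i) / fact (Suc i) = c (j + Suc i) * x^i / fact i"
      by (simp add: fact_Suc field_simps del: of_nat_Suc)
    ultimately show ?thesis by simp
  qed
  have "((\<lambda>x. c j + (\<Sum>i<M. c (j + Suc i) * x^(Suc i) / fact (Suc i))) has_real_derivative 0 + (\<Sum>i<M. c (j + Suc i) * x^i / fact i)) (at x)"
    by (intro DERIV_add DERIV_const DERIV_sum t)
  then show ?thesis unfolding P1 P2 by simp
qed

lemma Pp_cont: "continuous_on S (Pp w n f j)"
  unfolding Pp_def by (intro continuous_intros) auto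

lemma Pp_ftc:
  assumes "j \<le> n" "a \<le> b"
  shows "(Pp w n f (Suc j) has_integral (Pp w n f j b - Pp w n f j a)) {a..b}"
proof (rule fundamental_theorem_of_calculus[OF assms(2)])
  fix x assume "x \<in> {a..b}"
  have "(Pp w n f j has_vector_derivative Pp w n f (Suc j) x) (at x)"
    using Pp_deriv[OF assms(1)] by (simp add: has_real_derivative_iff_has_vector_derivative)
  then show "(Pp w n f j has_vector_derivative Pp w n f (Suc j) x) (at x within {a..b})"
    by (rule has_vector_derivative_at_within)
qed

lemma Ee_left:
  assumes "j \<le> n" "a \<le> b" "b \<le> 0"
  shows "(Ee w n f (Suc j) has_integral (Pp w n f j b - Pp w n f j a)) {a..b}"
    "Ee w n f (Suc j) absolutely_integrable_on {a..b}"
proof -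
  have eq: "Ee w n f (Suc j) x = Pp w n f (Suc j) x" if "x \<in> {a..b}" for x
  proof -
    have "\<not> 0 < x" using that assms by auto
    then show ?thesis unfolding Ee_def by (simp only: if_False)
  qed
  show "(Ee w n f (Suc j) has_integral (Pp w n f j b - Pp w n f j a)) {a..b}"
  proof -
    have i: "(Pp w n f (Suc j) has_integral (Pp w n f j b - Pp w n f j a)) {a..b}" by (rule Pp_ftc[OF assms(1,2)])
    have "(Ee w n f (Suc j) has_integral (Pp w n f j b - Pp w n f j a)) {a..b} = (Pp w n f (Suc j) has_integral (Pp w n f j b - Pp w n f j a)) {a..b}"
      by (rule has_integral_cong) (rule eq)
    then show ?thesis using i by simp
  qed
  have "Pp w n f (Suc j) absolutely_integrable_on {a..b}"
    by (rule absolutely_integrable_continuous_real[OF Pp_cont])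
  then show "Ee w n f (Suc j) absolutely_integrable_on {a..b}"
  proof -
    have "(Ee w n f (Suc j) absolutely_integrable_on {a..b}) = (Pp w n f (Suc j) absolutely_integrable_on {a..b})"
      by (rule set_integrable_cong) (auto simp: eq)
    then show ?thesis using \<open>Pp w n f (Suc j) absolutely_integrable_on {a..b}\<close> by simp
  qed
qed

lemma Ee_right:
  assumes f: "Dom w {0..} n f" and j: "j \<le> n" and ab: "0 \<le> a" "a \<le> b"
  shows "(Ee w n f (Suc j) has_integral (dd w f j b - dd w f j a)) {a..b}"
    "Ee w n f (Suc j) absolutely_integrable_on {a..b}"
proof -
  have H: "Hder w {0..} (dd w f j) (dd w f (Suc j))" by (rule dd_Hder[OF f j])
  have eq: "Ee w n f (Suc j) x = dd w f (Suc j) x" if "x \<in> {a..b} - {0}" for x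
  proof -
    have "0 < x" using that ab by auto
    then show ?thesis unfolding Ee_def by (simp only: if_True)
  qed
  have a0: "a \<in> {0..}" "b \<in> {0..}" using ab by auto
  have int: "dd w f (Suc j) integrable_on {a..b}" by (rule Hder_integrable[OF H a0 ab(2)])
  have ev: "dd w f j b - dd w f j a = integral {a..b} (dd w f (Suc j))" by (rule Hder_eq[OF H a0 ab(2)])
  have "(dd w f (Suc j) has_integral (dd w f j b - dd w f j a)) {a..b}"
    unfolding ev by (rule integrable_integral[OF int])
  then show "(Ee w n f (Suc j) has_integral (dd w f j b - dd w f j a)) {a..b}"
    using has_integral_spike[of "{0}" "{a..b}" "Ee w n f (Suc j)" "dd w f (Suc j)"] eq by blast
  have ai: "dd w f (Suc j) absolutely_integrable_on {a..b}" by (rule Hder_ai[OF H a0 ab(2)])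
  show "Ee w n f (Suc j) absolutely_integrable_on {a..b}"
    using absolutely_integrable_spike[OF ai negligible_sing eq] .
qed

lemma Ee_ftc:
  assumes f: "Dom w {0..} n f" and j: "j \<le> n" and xy: "x \<le> y"
  shows "(Ee w n f (Suc j) has_integral (Ee w n f j y - Ee w n f j x)) {x..y}"
    "Ee w n f (Suc j) absolutely_integrable_on {x..y}"
proof -
  have "(Ee w n f (Suc j) has_integral (Ee w n f j y - Ee w n f j x)) {x..y} \<and>
        Ee w n f (Suc j) absolutely_integrable_on {x..y}"
  proof (cases "y \<le> 0")
    case True
    then have "Ee w n f j y = Pp w n f j y" "Ee w n f j x = Pp w n f j x" using xy by (auto simp: Ee_def)
    then show ?thesis using Ee_left[OF j xy True, of w f] by simp
  next
    case False
    show ?thesis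
    proof (cases "0 < x")
      case True
      then have "Ee w n f j y = dd w f j y" "Ee w n f j x = dd w f j x" using xy by (auto simp: Ee_def)
      then show ?thesis using Ee_right[OF f j _ xy] True by simp
    next
      case x0: False
      have L1: "(Ee w n f (Suc j) has_integral (Pp w n f j 0 - Pp w n f j x)) {x..0}"
        and L2: "Ee w n f (Suc j) absolutely_integrable_on {x..0}"
        using Ee_left[OF j, of x 0 w f] x0 by auto
      have R1: "(Ee w n f (Suc j) has_integral (dd w f j y - dd w f j 0)) {0..y}"
        and R2: "Ee w n f (Suc j) absolutely_integrable_on {0..y}"
        using Ee_right[OF f j, of 0 y] False by auto
      have "(Ee w n f (Suc j) has_integral ((Pp w n f j 0 - Pp w n f j x) + (dd w f j y - dd w f j 0))) {x..y}"
        by (rule has_integral_combine[OF _ _ L1 R1]) (use x0 False in auto)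
      moreover have "(Pp w n f j 0 - Pp w n f j x) + (dd w f j y - dd w f j 0) = Ee w n f j y - Ee w n f j x"
        using Pp_at0[OF j, of w f] x0 False by (simp add: Ee_def)
      moreover have "Ee w n f (Suc j) absolutely_integrable_on ({x..0} \<union> {0..y})"
        by (rule set_integrable_Un[OF L2 R2]) auto
      moreover have "{x..0} \<union> {0..y} = {x..y}" using x0 False by auto
      ultimately show ?thesis by simp
    qed
  qed
  then show "(Ee w n f (Suc j) has_integral (Ee w n f j y - Ee w n f j x)) {x..y}"
    "Ee w n f (Suc j) absolutely_integrable_on {x..y}" by auto
qed

lemma pow_le_1n: "i \<le> n \<Longrightarrow> \<bar>x::real\<bar> ^ i \<le> 1 + \<bar>x\<bar> ^ n"
proof (cases "\<bar>x\<bar> \<le> 1")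
  case True
  then have "\<bar>x\<bar> ^ i \<le> 1" by (simp add: power_le_one)
  then show ?thesis by (smt (verit) zero_le_power abs_ge_zero)
next
  case False
  assume "i \<le> n"
  then have "\<bar>x\<bar> ^ i \<le> \<bar>x\<bar> ^ n" using False by (intro power_increasing) auto
  then show ?thesis by simp
qed

lemma Pp_bound: "\<bar>Pp w n f j x\<bar> \<le> (\<Sum>i<Suc n - j. \<bar>dd w f (j+i) 0\<bar>) * (1 + \<bar>x\<bar> ^ n)"
proof -
  have "\<bar>Pp w n f j x\<bar> \<le> (\<Sum>i<Suc n - j. \<bar>dd w f (j+i) 0 * x^i / fact i\<bar>)"
    unfolding Pp_def by (rule sum_abs)
  also have "\<dots> \<le> (\<Sum>i<Suc n - j. \<bar>dd w f (j+i) 0\<bar> * (1 + \<bar>x\<bar> ^ n))"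
  proof (rule sum_mono)
    fix i assume "i \<in> {..<Suc n - j}"
    then have i: "i \<le> n" by auto
    have "\<bar>dd w f (j+i) 0 * x^i / fact i\<bar> = \<bar>dd w f (j+i) 0\<bar> * (\<bar>x\<bar>^i / fact i)"
      by (simp add: abs_mult power_abs)
    also have "\<dots> \<le> \<bar>dd w f (j+i) 0\<bar> * (1 + \<bar>x\<bar> ^ n)"
    proof (rule mult_left_mono)
      have d: "(1::real) \<le> fact i" by (rule fact_ge_1)
      have "\<bar>x\<bar>^i \<le> \<bar>x\<bar>^i * fact i" using d mult_left_mono[of 1 "fact i" "\<bar>x\<bar>^i"] by simp
      then have "\<bar>x\<bar>^i / fact i \<le> \<bar>x\<bar>^i" using d by (simp add: pos_divide_le_eq)
      then show "\<bar>x\<bar>^i / fact i \<le> 1 + \<bar>x\<bar> ^ n" using pow_le_1n[OF i, of x] by linarith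
    qed simp
    finally show "\<bar>dd w f (j+i) 0 * x^i / fact i\<bar> \<le> \<bar>dd w f (j+i) 0\<bar> * (1 + \<bar>x\<bar> ^ n)" .
  qed
  also have "\<dots> = (\<Sum>i<Suc n - j. \<bar>dd w f (j+i) 0\<bar>) * (1 + \<bar>x\<bar> ^ n)"
    by (simp add: sum_distrib_right)
  finally show ?thesis .
qed

lemma Pp_sq_int:
  assumes w: "0 < w"
  shows "(\<lambda>x. (Pp w n f j x)\<^sup>2 * exp (w * x)) integrable_on {..0}"
proof (rule measurable_bounded_by_integrable_imp_integrable_real)
  define B where "B = (\<Sum>i<Suc n - j. \<bar>dd w f (j+i) 0\<bar>)"
  show "(\<lambda>x. (Pp w n f j x)\<^sup>2 * exp (w * x)) \<in> borel_measurable (lebesgue_on {..0})"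
    by (rule continuous_imp_measurable_on_sets_lebesgue) (auto intro!: continuous_intros continuous_on_compose2[OF Pp_cont])
  show "(\<lambda>x. B\<^sup>2 * ((1 + \<bar>x\<bar> ^ n)\<^sup>2 * exp (w * x))) integrable_on {..0}"
    by (rule integrable_on_mult_right[OF Wint[OF w]])
  show "\<bar>(Pp w n f j x)\<^sup>2 * exp (w * x)\<bar> \<le> B\<^sup>2 * ((1 + \<bar>x\<bar> ^ n)\<^sup>2 * exp (w * x))" for x
  proof -
    have "\<bar>Pp w n f j x\<bar> \<le> B * (1 + \<bar>x\<bar> ^ n)" unfolding B_def by (rule Pp_bound)
    then have "\<bar>Pp w n f j x\<bar>\<^sup>2 \<le> (B * (1 + \<bar>x\<bar> ^ n))\<^sup>2" by (intro power_mono) auto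
    then have "(Pp w n f j x)\<^sup>2 * exp (w * x) \<le> (B * (1 + \<bar>x\<bar> ^ n))\<^sup>2 * exp (w * x)"
      by (intro mult_right_mono) auto
    then show ?thesis by (simp add: power_mult_distrib mult.assoc)
  qed
qed auto



lemma Ee_pos: "0 < x \<Longrightarrow> Ee w n f j x = dd w f j x" by (simp add: Ee_def)
lemma Ee_nonpos: "x \<le> 0 \<Longrightarrow> Ee w n f j x = Pp w n f j x" by (simp add: Ee_def)

lemma Ee_sq:
  assumes f: "Dom w {0..} n f" and j: "j \<le> n" and w: "0 < w"
  shows "((\<lambda>t. (Ee w n f (Suc j) t)\<^sup>2 * exp (w * t)) has_integral
     (integral {0..} (\<lambda>t. (dd w f (Suc j) t)\<^sup>2 * exp (w * t)) + integral {..0} (\<lambda>t. (Pp w n f (Suc j) t)\<^sup>2 * exp (w * t)))) UNIV"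
proof -
  have H: "Hder w {0..} (dd w f j) (dd w f (Suc j))" by (rule dd_Hder[OF f j])
  have r: "((\<lambda>t. (dd w f (Suc j) t)\<^sup>2 * exp (w * t)) has_integral integral {0..} (\<lambda>t. (dd w f (Suc j) t)\<^sup>2 * exp (w * t))) {0..}"
    by (rule integrable_integral[OF Hder_sq[OF H]])
  have r': "((\<lambda>t. (Ee w n f (Suc j) t)\<^sup>2 * exp (w * t)) has_integral integral {0..} (\<lambda>t. (dd w f (Suc j) t)\<^sup>2 * exp (w * t))) {0..}"
  proof (rule has_integral_spike[OF negligible_sing _ r])
    fix x :: real assume "x \<in> {0..} - {0}"
    then have "0 < x" by auto
    then show "(Ee w n f (Suc j) x)\<^sup>2 * exp (w * x) = (dd w f (Suc j) x)\<^sup>2 * exp (w * x)" by (simp add: Ee_pos)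
  qed
  have l: "((\<lambda>t. (Pp w n f (Suc j) t)\<^sup>2 * exp (w * t)) has_integral integral {..0} (\<lambda>t. (Pp w n f (Suc j) t)\<^sup>2 * exp (w * t))) {..0}"
    by (rule integrable_integral[OF Pp_sq_int[OF w]])
  have eq: "(\<lambda>t. (Ee w n f (Suc j) t)\<^sup>2 * exp (w * t)) x = (\<lambda>t. (Pp w n f (Suc j) t)\<^sup>2 * exp (w * t)) x" if "x \<in> {..0}" for x
    using that by (simp add: Ee_nonpos)
  have l': "((\<lambda>t. (Ee w n f (Suc j) t)\<^sup>2 * exp (w * t)) has_integral integral {..0} (\<lambda>t. (Pp w n f (Suc j) t)\<^sup>2 * exp (w * t))) {..0}"
  proof -
    have "((\<lambda>t. (Ee w n f (Suc j) t)\<^sup>2 * exp (w * t)) has_integral integral {..0} (\<lambda>t. (Pp w n f (Suc j) t)\<^sup>2 * exp (w * t))) {..0}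
      = ((\<lambda>t. (Pp w n f (Suc j) t)\<^sup>2 * exp (w * t)) has_integral integral {..0} (\<lambda>t. (Pp w n f (Suc j) t)\<^sup>2 * exp (w * t))) {..0}"
      by (rule has_integral_cong) (rule eq)
    then show ?thesis using l by simp
  qed
  have neg: "negligible ({0..} \<inter> {..0::real})"
  proof -
    have "{0..} \<inter> {..0::real} = {0}" by auto
    then show ?thesis by simp
  qed
  have U: "{0..} \<union> {..0::real} = UNIV" by auto
  show ?thesis using has_integral_Un[OF r' l' neg] unfolding U .
qed

lemma Ee_Hder:
  assumes f: "Dom w {0..} n f" and j: "j \<le> n" and w: "0 < w"
  shows "Hder w UNIV (Ee w n f j) (Ee w n f (Suc j))"
  unfolding Hder_def
proof (intro conjI ballI impI)
  fix x y :: real assume "x \<in> UNIV" "y \<in> UNIV" and xy: "x \<le> y"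
  show "Ee w n f (Suc j) absolutely_integrable_on {x..y}" by (rule Ee_ftc(2)[OF f j xy])
  show "Ee w n f j y - Ee w n f j x = integral {x..y} (Ee w n f (Suc j))"
    using integral_unique[OF Ee_ftc(1)[OF f j xy]] by simp
next
  show "(\<lambda>x. (Ee w n f (Suc j) x)\<^sup>2 * exp (w * x)) integrable_on UNIV"
    using Ee_sq[OF f j w] by (rule has_integral_integrable)
qed

lemma uniqueU:
  assumes "Hder w UNIV F g1" "Hder w UNIV F g2" "Hsp w UNIV g1" "Hsp w UNIV g2"
  shows "g1 = g2"
proof
  fix x
  have c: "continuous_on {x-1..x+1} g" if "Hsp w UNIV g" for g
    using that unfolding Hsp_def by (auto intro: Hder_cont)
  show "g1 x = g2 x" by (rule Hder_unique[OF assms(1,2), of "x-1" "x+1"]) (use c assms in auto)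
qed

lemma Aop_Ee:
  assumes f: "Dom w {0..} n f" and w: "0 < w"
  shows "j \<le> n \<Longrightarrow> (Aop w UNIV ^^ j) (Ee w n f 0) = Ee w n f j"
proof (induction j)
  case 0 then show ?case by simp
next
  case (Suc j)
  have H1: "Hder w UNIV (Ee w n f j) (Ee w n f (Suc j))" by (rule Ee_Hder[OF f _ w]) (use Suc in auto)
  have H2: "Hsp w UNIV (Ee w n f (Suc j))" unfolding Hsp_def using Ee_Hder[OF f Suc.prems w] by blast
  from Aop_Hsp[OF H1 H2] have A: "Hder w UNIV (Ee w n f j) (Aop w UNIV (Ee w n f j))" "Hsp w UNIV (Aop w UNIV (Ee w n f j))" by auto
  have "Aop w UNIV (Ee w n f j) = Ee w n f (Suc j)" by (rule uniqueU[OF A(1) H1 A(2) H2])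
  then show ?case using Suc by simp
qed

lemma sq_int_ae:
  assumes H1: "Hder w UNIV F g1" and H2: "Hder w UNIV F g2"
  shows "integral UNIV (\<lambda>x. (g1 x)\<^sup>2 * exp (w * x)) = integral UNIV (\<lambda>x. (g2 x)\<^sup>2 * exp (w * x))"
proof -
  have "negligible {x. g1 x - g2 x \<noteq> 0}"
  proof (rule ae_unique0)
    fix x y :: real assume xy: "x \<le> y"
    show "(\<lambda>x. g1 x - g2 x) absolutely_integrable_on {x..y}"
      using Hder_ai[OF H1 _ _ xy] Hder_ai[OF H2 _ _ xy] by (intro set_integral_diff(1)) auto
    have "integral {x..y} (\<lambda>x. g1 x - g2 x) = integral {x..y} g1 - integral {x..y} g2"
      using Hder_integrable[OF H1 _ _ xy] Hder_integrable[OF H2 _ _ xy] by (intro integral_diff) auto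
    also have "\<dots> = 0" using Hder_eq[OF H1 _ _ xy] Hder_eq[OF H2 _ _ xy] by simp
    finally show "integral {x..y} (\<lambda>x. g1 x - g2 x) = 0" .
  qed
  then show ?thesis by (rule integral_spike) auto
qed



lemma int_sq_nonneg: fixes h :: "real \<Rightarrow> real" and w :: real shows "0 \<le> integral S (\<lambda>x. (h x)\<^sup>2 * exp (w * x))"
proof (cases "(\<lambda>x. (h x)\<^sup>2 * exp (w * x)) integrable_on S")
  case True then show ?thesis by (intro integral_nonneg) auto
next
  case False then show ?thesis by (simp add: not_integrable_integral)
qed

lemma Hnorm2_nonneg: "0 \<le> Hnorm2 w S g"
  unfolding Hnorm2_def using int_sq_nonneg[of S "Aop w S g" w] by simp

lemma Hnorm2_dd: "Hnorm2 w {0..} (dd w f k) = (Lim at_top (dd w f k))\<^sup>2 + integral {0..} (\<lambda>x. (dd w f (Suc k) x)\<^sup>2 * exp (w * x))"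
  unfolding Hnorm2_def dd_Suc ..

lemma dd_sq_bound:
  assumes f: "Dom w {0..} n f" and k: "k \<le> n" and w: "0 < w"
  shows "(dd w f k 0)\<^sup>2 \<le> (2 + 2 / w) * Hnorm2 w {0..} (dd w f k)"
proof -
  define I where "I = integral {0..} (\<lambda>x. (dd w f (Suc k) x)\<^sup>2 * exp (w * x))"
  obtain L where L: "(dd w f k \<longlongrightarrow> L) at_top" "(dd w f k 0 - L)\<^sup>2 \<le> I / w"
    using Hder_lim0[OF dd_Hder[OF f k] w] unfolding I_def by blast
  have Lim: "Lim at_top (dd w f k) = L" by (rule tendsto_Lim[OF _ L(1)]) simp
  have HN: "Hnorm2 w {0..} (dd w f k) = L\<^sup>2 + I" unfolding Hnorm2_dd Lim I_def ..
  have I0: "0 \<le> I" unfolding I_def by (rule int_sq_nonneg)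
  have "(dd w f k 0)\<^sup>2 = (L + (dd w f k 0 - L))\<^sup>2" by simp
  also have "\<dots> \<le> 2 * L\<^sup>2 + 2 * (dd w f k 0 - L)\<^sup>2" by (rule sq2)
  also have "\<dots> \<le> 2 * L\<^sup>2 + 2 * (I / w)" using L(2) by simp
  also have "\<dots> \<le> (2 + 2 / w) * (L\<^sup>2 + I)"
  proof -
    have "0 \<le> 2 * I + 2 * L\<^sup>2 / w" using I0 w by simp
    then show ?thesis by (simp add: algebra_simps)
  qed
  finally show ?thesis unfolding HN .
qed

lemma In_bound:
  assumes w: "0 < w" and s: "0 \<le> s" and B: "\<And>k. k \<le> n \<Longrightarrow> \<bar>dd w f k 0\<bar> \<le> s"
  shows "integral {..0} (\<lambda>x. (Pp w n f (Suc j) x)\<^sup>2 * exp (w * x))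
    \<le> (real (Suc n) * s)\<^sup>2 * integral {..0} (\<lambda>x. (1 + \<bar>x\<bar> ^ n)\<^sup>2 * exp (w * x))"
proof -
  have Bj: "(\<Sum>i<Suc n - Suc j. \<bar>dd w f (Suc j + i) 0\<bar>) \<le> real (Suc n) * s"
  proof -
    have "(\<Sum>i<Suc n - Suc j. \<bar>dd w f (Suc j + i) 0\<bar>) \<le> (\<Sum>i<Suc n - Suc j. s)"
      by (rule sum_mono) (rule B; auto)
    also have "\<dots> = real (Suc n - Suc j) * s" by simp
    also have "\<dots> \<le> real (Suc n) * s" using s by (intro mult_right_mono) auto
    finally show ?thesis .
  qed
  have pt: "(Pp w n f (Suc j) x)\<^sup>2 * exp (w * x) \<le> (real (Suc n) * s)\<^sup>2 * ((1 + \<bar>x\<bar> ^ n)\<^sup>2 * exp (w * x))" for x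
  proof -
    have "\<bar>Pp w n f (Suc j) x\<bar> \<le> (\<Sum>i<Suc n - Suc j. \<bar>dd w f (Suc j + i) 0\<bar>) * (1 + \<bar>x\<bar> ^ n)"
      by (rule Pp_bound)
    also have "\<dots> \<le> (real (Suc n) * s) * (1 + \<bar>x\<bar> ^ n)"
      by (rule mult_right_mono[OF Bj]) auto
    finally have "\<bar>Pp w n f (Suc j) x\<bar>\<^sup>2 \<le> ((real (Suc n) * s) * (1 + \<bar>x\<bar> ^ n))\<^sup>2"
      by (intro power_mono) auto
    then have "(Pp w n f (Suc j) x)\<^sup>2 * exp (w * x) \<le> ((real (Suc n) * s) * (1 + \<bar>x\<bar> ^ n))\<^sup>2 * exp (w * x)"
      by (intro mult_right_mono) auto
    then show ?thesis by (simp add: power_mult_distrib mult.assoc)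
  qed
  have "integral {..0} (\<lambda>x. (Pp w n f (Suc j) x)\<^sup>2 * exp (w * x))
      \<le> integral {..0} (\<lambda>x. (real (Suc n) * s)\<^sup>2 * ((1 + \<bar>x\<bar> ^ n)\<^sup>2 * exp (w * x)))"
    by (rule integral_le[OF Pp_sq_int[OF w] integrable_on_mult_right[OF Wint[OF w]] pt])
  then show ?thesis by simp
qed

definition Kc :: "real \<Rightarrow> nat \<Rightarrow> real" where
  "Kc w n = (real (Suc n))\<^sup>2 * (2 + 2 / w) * integral {..0} (\<lambda>x. (1 + \<bar>x\<bar> ^ n)\<^sup>2 * exp (w * x))"

lemma Kc_nonneg: "0 < w \<Longrightarrow> 0 \<le> Kc w n"
  unfolding Kc_def by (intro mult_nonneg_nonneg integral_nonneg Wint) auto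

lemma main_bound:
  assumes f: "Dom w {0..} n f" and w: "0 < w"
  shows "gnorm w UNIV n (Ee w n f 0) \<le> sqrt (1 + real (Suc n) * Kc w n) * gnorm w {0..} n f"
proof -
  define C0 where "C0 = 2 + 2 / w"
  define T where "T = (\<Sum>j\<le>n. Hnorm2 w {0..} (dd w f j))"
  define q where "q = integral {..0} (\<lambda>x. (1 + \<bar>x\<bar> ^ n)\<^sup>2 * exp (w * x))"
  have C0: "0 < C0" using w unfolding C0_def by (simp add: add_pos_pos)
  have gS: "gnorm w {0..} n f = sqrt T" unfolding gnorm_def T_def dd_def ..
  have NT: "Hnorm2 w {0..} (dd w f k) \<le> T" if "k \<le> n" for k
    unfolding T_def by (rule member_le_sum) (use that Hnorm2_nonneg in auto)
  have T0: "0 \<le> T" unfolding T_def by (intro sum_nonneg Hnorm2_nonneg)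
  have s: "\<bar>dd w f k 0\<bar> \<le> sqrt (C0 * T)" if k: "k \<le> n" for k
  proof -
    have "(dd w f k 0)\<^sup>2 \<le> C0 * Hnorm2 w {0..} (dd w f k)" using dd_sq_bound[OF f k w] unfolding C0_def .
    also have "\<dots> \<le> C0 * T" using NT[OF k] C0 by (intro mult_left_mono) auto
    finally have "sqrt ((dd w f k 0)\<^sup>2) \<le> sqrt (C0 * T)" by (rule real_sqrt_le_mono)
    then show ?thesis by simp
  qed
  have eachj: "Hnorm2 w UNIV ((Aop w UNIV ^^ j) (Ee w n f 0)) \<le> Hnorm2 w {0..} (dd w f j) + Kc w n * T"
    if j: "j \<le> n" for j
  proof -
    have A: "(Aop w UNIV ^^ j) (Ee w n f 0) = Ee w n f j" by (rule Aop_Ee[OF f w j])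
    have ev: "\<forall>\<^sub>F x in at_top. Ee w n f j x = dd w f j x"
      by (rule eventually_at_top_linorderI[of 1]) (simp add: Ee_pos)
    have Lim: "Lim at_top (Ee w n f j) = Lim at_top (dd w f j)" by (rule Lim_cong[OF ev refl])
    have HE: "Hder w UNIV (Ee w n f j) (Ee w n f (Suc j))" by (rule Ee_Hder[OF f j w])
    have HA: "Hder w UNIV (Ee w n f j) (Aop w UNIV (Ee w n f j))"
      by (rule Aop_Hder) (use HE in \<open>auto simp: Hsp_def\<close>)
    define In where "In = integral {..0} (\<lambda>t. (Pp w n f (Suc j) t)\<^sup>2 * exp (w * t))"
    have "integral UNIV (\<lambda>x. (Aop w UNIV (Ee w n f j) x)\<^sup>2 * exp (w * x)) = integral UNIV (\<lambda>x. (Ee w n f (Suc j) x)\<^sup>2 * exp (w * x))"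
      by (rule sq_int_ae[OF HA HE])
    also have "\<dots> = integral {0..} (\<lambda>t. (dd w f (Suc j) t)\<^sup>2 * exp (w * t)) + In"
      unfolding In_def by (rule integral_unique[OF Ee_sq[OF f j w]])
    finally have "Hnorm2 w UNIV (Ee w n f j) = Hnorm2 w {0..} (dd w f j) + In"
      unfolding Hnorm2_dd by (simp add: Hnorm2_def Lim)
    moreover have "In \<le> Kc w n * T"
    proof -
      have "In \<le> (real (Suc n) * sqrt (C0 * T))\<^sup>2 * q"
        unfolding In_def q_def by (rule In_bound[OF w _ s]) (use C0 T0 in auto)
      also have "(real (Suc n) * sqrt (C0 * T))\<^sup>2 * q = Kc w n * T"
        using C0 T0 unfolding Kc_def q_def C0_def by (simp add: power_mult_distrib)
      finally show ?thesis .
    qed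
    ultimately show ?thesis unfolding A by simp
  qed
  have "(\<Sum>j\<le>n. Hnorm2 w UNIV ((Aop w UNIV ^^ j) (Ee w n f 0))) \<le> (\<Sum>j\<le>n. Hnorm2 w {0..} (dd w f j) + Kc w n * T)"
    by (rule sum_mono) (rule eachj; simp)
  also have "\<dots> = (1 + real (Suc n) * Kc w n) * T" unfolding T_def by (simp add: sum.distrib algebra_simps)
  finally have "gnorm w UNIV n (Ee w n f 0) \<le> sqrt ((1 + real (Suc n) * Kc w n) * T)"
    unfolding gnorm_def by (rule real_sqrt_le_mono)
  also have "\<dots> = sqrt (1 + real (Suc n) * Kc w n) * gnorm w {0..} n f" unfolding gS by (simp add: real_sqrt_mult)
  finally show ?thesis .
qed

theorem lemma5p7:
  fixes w :: real and m :: nat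
  assumes "w > 0" and "m > 0"
  shows "\<exists>L :: (real \<Rightarrow> real) \<Rightarrow> (real \<Rightarrow> real).
     (\<forall>f. Dom w {0..} (2*m) f \<longrightarrow> Dom w UNIV (2*m) (L f))
   \<and> (\<forall>f g. Dom w {0..} (2*m) f \<longrightarrow> Dom w {0..} (2*m) g \<longrightarrow> (\<forall>x\<ge>0. f x = g x) \<longrightarrow> L f = L g)
   \<and> (\<forall>f g. Dom w {0..} (2*m) f \<longrightarrow> Dom w {0..} (2*m) g \<longrightarrow> L (\<lambda>x. f x + g x) = (\<lambda>x. L f x + L g x))
   \<and> (\<forall>c f. Dom w {0..} (2*m) f \<longrightarrow> L (\<lambda>x. c * f x) = (\<lambda>x. c * L f x))
   \<and> (\<exists>C. \<forall>f. Dom w {0..} (2*m) f \<longrightarrow> gnorm w UNIV (2*m) (L f) \<le> C * gnorm w {0..} (2*m) f)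
   \<and> (\<forall>f. Dom w {0..} (2*m) f \<longrightarrow> (\<forall>x\<ge>0. L f x = f x) \<and> Lim at_top (L f) = Lim at_top f)"
proof -
  define n where "n = 2 * m"
  have w: "0 < w" using assms(1) .
  define L where "L = (\<lambda>f. Ee w n f 0)"
  have P1: "Dom w UNIV n (L f)" if f: "Dom w {0..} n f" for f
    unfolding Dom_def L_def
  proof (intro allI impI)
    fix j assume j: "j \<le> n"
    show "Hsp w UNIV ((Aop w UNIV ^^ j) (Ee w n f 0))"
      unfolding Aop_Ee[OF f w j] Hsp_def using Ee_Hder[OF f j w] by blast
  qed
  have P2: "L f = L g" if fg: "\<And>x. 0 \<le> x \<Longrightarrow> f x = g x" for f g
  proof
    fix x
    have d: "dd w f i 0 = dd w g i 0" for i by (rule dd_cong[OF fg]) auto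
    show "L f x = L g x"
    proof (cases "0 < x")
      case True then show ?thesis unfolding L_def Ee_def using fg[of x] by simp
    next
      case False then show ?thesis unfolding L_def Ee_def Pp_def using d by simp
    qed
  qed
  have P3: "L (\<lambda>x. f x + g x) = (\<lambda>x. L f x + L g x)" if f: "Dom w {0..} n f" and g: "Dom w {0..} n g" for f g
  proof
    fix x
    have d: "dd w (\<lambda>x. f x + g x) i 0 = dd w f i 0 + dd w g i 0" if "i \<le> n" for i
      by (rule dd_add[OF f g]) (use that in auto)
    have "Pp w n (\<lambda>x. f x + g x) 0 x = (\<Sum>i<Suc n - 0. dd w f (0+i) 0 * x^i / fact i + dd w g (0+i) 0 * x^i / fact i)"
      unfolding Pp_def
    proof (rule sum.cong[OF refl])
      fix i assume "i \<in> {..<Suc n - 0}" then have "i \<le> n" by auto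
      then show "dd w (\<lambda>x. f x + g x) (0 + i) 0 * x ^ i / fact i = dd w f (0+i) 0 * x^i / fact i + dd w g (0+i) 0 * x^i / fact i"
        using d[of i] by (simp add: add_divide_distrib distrib_right)
    qed
    also have "\<dots> = Pp w n f 0 x + Pp w n g 0 x" unfolding Pp_def by (rule sum.distrib)
    finally have "Pp w n (\<lambda>x. f x + g x) 0 x = Pp w n f 0 x + Pp w n g 0 x" .
    then show "L (\<lambda>x. f x + g x) x = L f x + L g x" unfolding L_def Ee_def by simp
  qed
  have P4: "L (\<lambda>x. c * f x) = (\<lambda>x. c * L f x)" if f: "Dom w {0..} n f" for c f
  proof
    fix x
    have d: "dd w (\<lambda>x. c * f x) i 0 = c * dd w f i 0" if "i \<le> n" for i
      by (rule dd_cmult[OF f]) (use that in auto)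
    have "Pp w n (\<lambda>x. c * f x) 0 x = (\<Sum>i<Suc n - 0. c * (dd w f (0+i) 0 * x^i / fact i))"
      unfolding Pp_def
    proof (rule sum.cong[OF refl])
      fix i assume "i \<in> {..<Suc n - 0}" then have "i \<le> n" by auto
      then show "dd w (\<lambda>x. c * f x) (0 + i) 0 * x ^ i / fact i = c * (dd w f (0+i) 0 * x^i / fact i)"
        using d[of i] by simp
    qed
    also have "\<dots> = c * Pp w n f 0 x" unfolding Pp_def by (rule sum_distrib_left[symmetric])
    finally have "Pp w n (\<lambda>x. c * f x) 0 x = c * Pp w n f 0 x" .
    then show "L (\<lambda>x. c * f x) x = c * L f x" unfolding L_def Ee_def by simp
  qed
  have P5: "gnorm w UNIV n (L f) \<le> sqrt (1 + real (Suc n) * Kc w n) * gnorm w {0..} n f" if f: "Dom w {0..} n f" for f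
    unfolding L_def by (rule main_bound[OF f w])
  have P6: "(\<forall>x\<ge>0. L f x = f x) \<and> Lim at_top (L f) = Lim at_top f" for f
  proof
    show "\<forall>x\<ge>0. L f x = f x"
    proof (intro allI impI)
      fix x :: real assume x: "0 \<le> x"
      show "L f x = f x"
      proof (cases "x = 0")
        case True
        have "Pp w n f 0 0 = dd w f 0 0" by (rule Pp_at0) simp
        then show ?thesis using True unfolding L_def Ee_def by simp
      next
        case False then show ?thesis using x unfolding L_def Ee_def by simp
      qed
    qed
    have ev: "\<forall>\<^sub>F x in at_top. L f x = f x"
      by (rule eventually_at_top_linorderI[of 1]) (simp add: L_def Ee_pos)
    show "Lim at_top (L f) = Lim at_top f" by (rule Lim_cong[OF ev refl])
  qed
  show ?thesis unfolding n_def[symmetric]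
    apply (rule exI[of _ L])
    using P1 P2 P3 P4 P5 P6 by blast
qed

end
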